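(* Let $X\in\mathbb{R}^{d\times n}$, $\rho>0$, and let $(\beta_k)_{k\ge0}$ be positive numbers with $\sum_k \frac{\beta_{k+1}}{\beta_k^2}<\infty$ and $\sum_k\frac{1}{\beta_k}<\infty$. Let $F(Z)=\log\det(I+Z^TZ)$ for $Z\in\mathbb{R}^{n\times n}$ and $$L(Z,W,Y,\beta)=F(Z)+\rho\|X-XW\|_F^2+\frac{\beta}{2}\|Z-W\|_F^2+\mathrm{Tr}(Y^T(Z-W)).$$ Let $Z_0\in\mathbb{R}^{n\times n}$, $Y_0=0$, and for $k\ge 0$ define $W_{k+1}=(\beta_k I+2\rho X^TX)^{-1}(2\rho X^TX+Y_k+\beta_k Z_k)$ (the minimizer of $W\mapsto L(Z_k,W,Y_k,\beta_k)$), let $Z_{k+1}$ be a global minimizer of $Z\mapsto L(Z,W_{k+1},Y_k,\beta_k)$, and set $Y_{k+1}=Y_k+\beta_k(Z_{k+1}-W_{k+1})$. Then the sequences $\{W_k\}$ and $\{Z_k\}$ are bounded.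
   Context: $I$ is the $n\times n$ identity matrix, $\|\cdot\|_F$ the Frobenius norm, $\mathrm{Tr}$ the trace. *)

theory Defs
  imports "HOL-Analysis.Analysis"
begin

definition frob_norm :: "real^'c^'r \<Rightarrow> real" where
  "frob_norm A = sqrt (\<Sum>i\<in>UNIV. \<Sum>j\<in>UNIV. (A $ i $ j)^2)"

definition logdetF :: "real^'n^'n \<Rightarrow> real" where
  "logdetF Z = ln (det (mat 1 + transpose Z ** Z))"

definition augL :: "real \<Rightarrow> real^'n^'d \<Rightarrow> real^'n^'n \<Rightarrow> real^'n^'n \<Rightarrow> real^'n^'n \<Rightarrow> real \<Rightarrow> real" where
  "augL \<rho> X Z W Y \<beta> = logdetF Z + \<rho> * (frob_norm (X - X ** W))^2
     + \<beta> / 2 * (frob_norm (Z - W))^2 + trace (transpose Y ** (Z - W))"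

end

theory Submission
  imports Defs
begin


definition gram :: "('n::finite \<Rightarrow> 'a::real_inner) \<Rightarrow> real" where
  "gram v = det (\<chi> i. \<chi> k. v i \<bullet> v k :: real^'n^'n)"

lemma gram_L1:
  fixes v :: "'n::finite \<Rightarrow> 'a::real_inner"
  assumes mj: "m \<noteq> j"
  shows "gram (v(j := v j + c *\<^sub>R v m)) = gram v"
proof -
  let ?A = "(\<chi> i. \<chi> k. v i \<bullet> v k :: real^'n^'n)"
  let ?A1 = "(\<chi> i. if i = j then row j ?A + c *s row m ?A else row i ?A) :: real^'n^'n"
  have d1: "det ?A1 = det ?A" by (rule det_row_operation) (use mj in auto)
  let ?T = "(\<chi> i. if i = j then row j (transpose ?A1) + c *s row m (transpose ?A1) else row i (transpose ?A1)) :: real^'n^'n"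
  have d2: "det ?T = det (transpose ?A1)" by (rule det_row_operation) (use mj in auto)
  have eq: "transpose ?T = (\<chi> i. \<chi> k. (v(j := v j + c *\<^sub>R v m)) i \<bullet> (v(j := v j + c *\<^sub>R v m)) k)"
  proof (rule vec_eq_iff[THEN iffD2], intro allI, rule vec_eq_iff[THEN iffD2], intro allI)
    fix i k
    show "transpose ?T $ i $ k = (\<chi> i. \<chi> k. (v(j := v j + c *\<^sub>R v m)) i \<bullet> (v(j := v j + c *\<^sub>R v m)) k) $ i $ k"
      using mj by (cases "i = j"; cases "k = j") (simp_all add: transpose_def row_def inner_add_left inner_add_right
        inner_commute algebra_simps)
  qed
  show ?thesis
    by (simp only: gram_def eq[symmetric] det_transpose d2 d1)
qed

lemma vec2_eqI: "(\<And>i k. A$i$k = B$i$k) \<Longrightarrow> A = B"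
  by (simp add: vec_eq_iff)

lemma gram_L2:
  fixes v :: "'n::finite \<Rightarrow> 'a::real_inner"
  assumes "r \<in> span (v ` (UNIV - {j}))"
  shows "gram (v(j := v j + r)) = gram v"
  using assms
proof (induction rule: span_induct_alt)
  case base then show ?case by simp
next
  case (step c x y)
  then obtain m where m: "m \<noteq> j" "x = v m" by auto
  let ?v' = "v(j := v j + y)"
  have e: "v(j := v j + (c *\<^sub>R x + y)) = ?v'(j := ?v' j + c *\<^sub>R ?v' m)"
    using m by (auto simp: algebra_simps)
  show ?case by (simp only: e gram_L1[OF m(1)] step.IH)
qed

definition Dm :: "'n::finite \<Rightarrow> ('n \<Rightarrow> 'a::real_inner) \<Rightarrow> real" where
  "Dm j v = det (\<chi> i. \<chi> k. if i = j \<or> k = j then (if i = k then 1 else 0) else v i \<bullet> v k :: real^'n^'n)"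

lemma Dm_upd: "Dm j (v(j := u)) = Dm j v"
  unfolding Dm_def by (rule arg_cong[where f=det], rule vec2_eqI) auto

lemma gram_L3:
  fixes v :: "'n::finite \<Rightarrow> 'a::real_inner"
  assumes orth: "\<And>k. k \<noteq> j \<Longrightarrow> p \<bullet> v k = 0"
  shows "gram (v(j := p)) = (p \<bullet> p) * Dm j v"
proof -
  let ?M = "(\<chi> i. \<chi> k. (v(j:=p)) i \<bullet> (v(j:=p)) k) :: real^'n^'n"
  define b where "b = (\<lambda>i. (\<chi> k. if i = j \<or> k = j then (if i = k then 1 else 0) else v i \<bullet> v k) :: real^'n)"
  have "?M = (\<chi> i. if i = j then (p\<bullet>p) *s b j else b i)"
  proof (rule vec2_eqI)
    fix i k
    show "?M $ i $ k = (\<chi> i. if i = j then (p\<bullet>p) *s b j else b i) $ i $ k"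
      using orth[of k] orth[of i] by (cases "i = j"; cases "k = j") (auto simp: b_def inner_commute)
  qed
  then have "det ?M = (p\<bullet>p) * det (\<chi> i. if i = j then b j else b i)"
    using det_row_mul[of j "p\<bullet>p" "\<lambda>i. b j" b] by simp
  also have "(\<chi> i. if i = j then b j else b i) = (\<chi> i. b i)" by (rule vec2_eqI) auto
  finally show ?thesis unfolding gram_def Dm_def b_def by simp
qed

definition vecs :: "real^'n^'n \<Rightarrow> 'n::finite \<Rightarrow> (real^'n) \<times> (real^'n)" where
  "vecs Z k = (axis k 1, column k Z)"

lemma gram_vecs: "gram (vecs Z) = det (mat 1 + transpose Z ** Z)"
  unfolding gram_def matrix_mult_transpose_dot_column
  by (rule arg_cong[where f=det], rule vec2_eqI) (simp add: vecs_def inner_axis_axis mat_def)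

lemma logdetF_gram: "logdetF Z = ln (gram (vecs Z))"
  unfolding logdetF_def gram_vecs ..

lemma decomp:
  fixes Z :: "real^'n::finite^'n" and u :: "(real^'n) \<times> (real^'n)"
  obtains y z where "y \<in> span (vecs Z ` (UNIV - {j}))"
    "\<And>w. w \<in> span (vecs Z ` (UNIV - {j})) \<Longrightarrow> z \<bullet> w = 0" "u = y + z"
  using orthogonal_subspace_decomp_exists[of "vecs Z ` (UNIV - {j})" u]
  unfolding orthogonal_def by metis

lemma fst_span:
  assumes "y \<in> span (vecs Z ` (UNIV - {j}))"
  shows "fst y $ j = 0"
  using assms
proof (induction rule: span_induct_alt)
  case base then show ?case by simp
next
  case (step c x y)
  then show ?case by (auto simp: vecs_def axis_def)
qed

lemma orth_gen:
  assumes "\<And>w. w \<in> span (vecs Z ` (UNIV - {j})) \<Longrightarrow> z \<bullet> w = 0" "k \<noteq> j"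
  shows "z \<bullet> vecs Z k = 0"
  using assms by (simp add: span_base)

lemma norm_ge1:
  assumes "y \<in> span (vecs Z ` (UNIV - {j}))" "vecs Z j = y + z"
  shows "1 \<le> norm z"
proof -
  have "fst z $ j = 1"
    using fst_span[OF assms(1)] assms(2) unfolding vecs_def
    by (metis add_diff_cancel_left' axis_nth diff_zero fst_conv fst_diff vector_minus_component)
  then have "1 \<le> norm (fst z)" using component_le_norm_cart[of "fst z" j] by simp
  also have "norm (fst z) \<le> norm z" using norm_fst_le[of "fst z" "snd z"] by simp
  finally show ?thesis .
qed

definition zc :: "'n::finite \<Rightarrow> real^'n^'n \<Rightarrow> real^'n^'n" where
  "zc j Z = (\<chi> r c. if c = j then 0 else Z$r$c)"

lemma vecs_zc: fixes Z :: "real^'n::finite^'n" shows "vecs (zc j Z) = (vecs Z)(j := (axis j 1, 0))"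
  by (rule ext) (simp add: vecs_def zc_def column_def vec_eq_iff)

lemma Dm_zc: fixes Z :: "real^'n::finite^'n" shows "Dm j (vecs Z) = gram (vecs (zc j Z))"
proof -
  have "gram ((vecs Z)(j := (axis j 1, 0))) = ((axis j 1, 0) \<bullet> (axis j (1::real), 0::real^'n)) * Dm j (vecs Z)"
    using gram_L3[where j=j and p="(axis j (1::real), 0::real^'n)" and v="vecs Z"] apply -
    apply (drule meta_mp)
    subgoal by (simp add: vecs_def inner_axis_axis)
    apply assumption done
  then show ?thesis by (simp add: vecs_zc inner_axis_axis)
qed

lemma gram_split:
  fixes Z :: "real^'n::finite^'n"
  obtains z :: "(real^'n) \<times> (real^'n)" where "1 \<le> norm z" "gram (vecs Z) = (z \<bullet> z) * gram (vecs (zc j Z))"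
proof -
  obtain y z where y: "y \<in> span (vecs Z ` (UNIV - {j}))"
    and z: "\<And>w. w \<in> span (vecs Z ` (UNIV - {j})) \<Longrightarrow> z \<bullet> w = 0" and e: "vecs Z j = y + z"
    using decomp[of Z j "vecs Z j"] by metis
  let ?v = "(vecs Z)(j := z)"
  have im: "?v ` (UNIV - {j}) = vecs Z ` (UNIV - {j})" by auto
  have "gram (?v(j := ?v j + y)) = gram ?v" by (rule gram_L2) (use y im in simp)
  moreover have "?v(j := ?v j + y) = vecs Z" using e by (auto simp: add.commute)
  ultimately have "gram (vecs Z) = gram ?v" by simp
  also have "\<dots> = (z \<bullet> z) * Dm j (vecs Z)" by (rule gram_L3) (rule orth_gen[OF z])
  finally have "gram (vecs Z) = (z \<bullet> z) * Dm j (vecs Z)" .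
  then show ?thesis using that[OF norm_ge1[OF y e]] by (simp add: Dm_zc)
qed

definition zcol :: "'n::finite set \<Rightarrow> real^'n^'n \<Rightarrow> real^'n^'n" where
  "zcol S Z = (\<chi> r c. if c \<in> S then Z$r$c else 0)"

lemma gram_vecs0: "gram (vecs (0::real^'n::finite^'n)) = 1"
proof -
  have "mat 1 + transpose 0 ** (0::real^'n^'n) = mat 1"
    by (rule vec2_eqI) (simp add: matrix_matrix_mult_def transpose_def)
  then show ?thesis by (simp add: gram_vecs)
qed

lemma zcol_empty: "zcol {} Z = 0" by (rule vec2_eqI) (simp add: zcol_def)
lemma zcol_UNIV: "zcol UNIV Z = Z" by (rule vec2_eqI) (simp add: zcol_def)
lemma zc_zcol: "x \<notin> S \<Longrightarrow> zc x (zcol (insert x S) Z) = zcol S Z"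
  by (rule vec2_eqI) (auto simp: zcol_def zc_def)
lemma zc_zcol2: "zc x (zcol (UNIV - A) Z) = zcol (UNIV - insert x A) Z"
  by (rule vec2_eqI) (auto simp: zcol_def zc_def)

lemma norm_inner_ge1: "1 \<le> norm z \<Longrightarrow> 1 \<le> z \<bullet> z"
  by (metis less_eq_real_def mult_mono norm_ge_zero one_le_power power2_eq_square power2_norm_eq_inner)

lemma gram_ge1_aux:
  fixes Z :: "real^'n::finite^'n"
  shows "finite S \<Longrightarrow> 1 \<le> gram (vecs (zcol S Z))"
proof (induction S rule: finite_induct)
  case empty then show ?case by (simp add: zcol_empty gram_vecs0)
next
  case (insert x S)
  obtain z :: "(real^'n) \<times> (real^'n)" where z: "1 \<le> norm z"
    "gram (vecs (zcol (insert x S) Z)) = (z \<bullet> z) * gram (vecs (zc x (zcol (insert x S) Z)))"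
    using gram_split by blast
  have "1 \<le> z \<bullet> z" using norm_inner_ge1[OF z(1)] .
  moreover have g: "1 \<le> gram (vecs (zcol S Z))" using insert by simp
  ultimately have "1 * 1 \<le> (z \<bullet> z) * gram (vecs (zcol S Z))"
    by (intro mult_mono) auto
  then show ?case using z(2) insert(2) by (simp add: zc_zcol)
qed

lemma gram_ge1: fixes Z :: "real^'n::finite^'n" shows "1 \<le> gram (vecs Z)"
  using gram_ge1_aux[of UNIV Z] by (simp add: zcol_UNIV)

lemma gram_zc_le: fixes Z :: "real^'n::finite^'n" shows "gram (vecs (zc j Z)) \<le> gram (vecs Z)"
proof -
  obtain z :: "(real^'n) \<times> (real^'n)" where z: "1 \<le> norm z"
    "gram (vecs Z) = (z \<bullet> z) * gram (vecs (zc j Z))"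
    using gram_split by blast
  have "1 \<le> z \<bullet> z" using norm_inner_ge1[OF z(1)] .
  moreover have "0 \<le> gram (vecs (zc j Z))" using gram_ge1[of "zc j Z"] by simp
  ultimately have "1 * gram (vecs (zc j Z)) \<le> (z \<bullet> z) * gram (vecs (zc j Z))"
    by (intro mult_right_mono) auto
  then show ?thesis using z(2) by simp
qed

lemma gram_zcol_le:
  fixes Z :: "real^'n::finite^'n"
  shows "finite A \<Longrightarrow> gram (vecs (zcol (UNIV - A) Z)) \<le> gram (vecs Z)"
proof (induction A rule: finite_induct)
  case empty then show ?case by (simp add: zcol_UNIV)
next
  case (insert x A)
  then show ?case using gram_zc_le[of x "zcol (UNIV - A) Z"] by (simp add: zc_zcol2)
qed

lemma col0: "column k (0::real^'n::finite^'m::finite) = 0"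
  by (simp add: column_def vec_eq_iff)

lemma gram_col_lb:
  fixes Z :: "real^'n::finite^'n"
  shows "1 + (norm (column j Z))\<^sup>2 \<le> gram (vecs Z)"
proof -
  let ?p = "(axis j (1::real), column j Z)"
  have e: "vecs (zcol (UNIV - (UNIV - {j})) Z) = (vecs (0::real^'n^'n))(j := ?p)"
    by (rule ext) (auto simp: vecs_def zcol_def column_def vec_eq_iff)
  have "gram ((vecs (0::real^'n^'n))(j := ?p)) = (?p \<bullet> ?p) * Dm j (vecs (0::real^'n^'n))"
    by (rule gram_L3) (simp add: vecs_def inner_axis_axis col0)
  also have "Dm j (vecs (0::real^'n^'n)) = 1"
  proof -
    have "zc j (0::real^'n^'n) = 0" by (rule vec2_eqI) (simp add: zc_def)
    then show ?thesis by (simp add: Dm_zc gram_vecs0)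
  qed
  finally have A: "gram ((vecs (0::real^'n^'n))(j := ?p)) = (?p \<bullet> ?p) * 1" .
  have B: "?p \<bullet> ?p = 1 + (norm (column j Z))\<^sup>2"
    by (simp add: inner_axis_axis power2_norm_eq_inner)
  have "gram (vecs (zcol (UNIV - (UNIV - {j})) Z)) = 1 + (norm (column j Z))\<^sup>2"
    unfolding e A B by simp
  then show ?thesis using gram_zcol_le[of "UNIV - {j}" Z] by simp
qed

definition cm :: "'n::finite \<Rightarrow> real^'n \<Rightarrow> real^'n^'n" where
  "cm j w = (\<chi> r c. if c = j then w$r else 0)"

lemma vecs_cm: fixes Z :: "real^'n::finite^'n"
  shows "vecs (Z + cm j w) = (vecs Z)(j := vecs Z j + (0, w))"
  by (rule ext) (auto simp: vecs_def cm_def column_def vec_eq_iff)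

lemma gram_col_lip:
  fixes Z :: "real^'n::finite^'n" and w :: "real^'n"
  shows "gram (vecs (Z + cm j w)) \<le> (1 + norm w)\<^sup>2 * gram (vecs Z)"
proof -
  let ?S = "span (vecs Z ` (UNIV - {j}))"
  obtain y z where y: "y \<in> ?S" and z: "\<And>u. u \<in> ?S \<Longrightarrow> z \<bullet> u = 0" and e: "vecs Z j = y + z"
    using decomp[of Z j "vecs Z j"] by metis
  obtain y' z' where y': "y' \<in> ?S" and z': "\<And>u. u \<in> ?S \<Longrightarrow> z' \<bullet> u = 0"
    and e': "(0::real^'n, w) = y' + z'"
    using decomp[of Z j "(0, w)"] by metis
  let ?v1 = "(vecs Z)(j := z + z')"
  have im: "?v1 ` (UNIV - {j}) = vecs Z ` (UNIV - {j})" by auto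
  have "gram (?v1(j := ?v1 j + (y + y'))) = gram ?v1"
    by (rule gram_L2) (use y y' im in \<open>simp add: span_add\<close>)
  moreover have "?v1(j := ?v1 j + (y + y')) = vecs (Z + cm j w)"
    unfolding vecs_cm e e' by (auto simp: algebra_simps)
  ultimately have "gram (vecs (Z + cm j w)) = gram ?v1" by simp
  also have "\<dots> = ((z + z') \<bullet> (z + z')) * Dm j (vecs Z)"
    by (rule gram_L3) (simp add: inner_add_left orth_gen[OF z] orth_gen[OF z'])
  finally have g1: "gram (vecs (Z + cm j w)) = ((z + z') \<bullet> (z + z')) * Dm j (vecs Z)" .
  let ?v = "(vecs Z)(j := z)"
  have im2: "?v ` (UNIV - {j}) = vecs Z ` (UNIV - {j})" by auto
  have "gram (?v(j := ?v j + y)) = gram ?v" by (rule gram_L2) (use y im2 in simp)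
  moreover have "?v(j := ?v j + y) = vecs Z" using e by (auto simp: add.commute)
  ultimately have "gram (vecs Z) = gram ?v" by simp
  also have "\<dots> = (z \<bullet> z) * Dm j (vecs Z)" by (rule gram_L3) (rule orth_gen[OF z])
  finally have g0: "gram (vecs Z) = (z \<bullet> z) * Dm j (vecs Z)" .
  have D0: "0 \<le> Dm j (vecs Z)" using gram_ge1[of "zc j Z"] by (simp add: Dm_zc)
  have n1: "1 \<le> norm z" by (rule norm_ge1[OF y e])
  have "orthogonal y' z'" using z'[OF y'] by (simp add: orthogonal_def inner_commute)
  then have A: "(norm (y' + z'))\<^sup>2 = (norm y')\<^sup>2 + (norm z')\<^sup>2" by (rule norm_add_Pythagorean)
  have B: "norm (y' + z') = norm w" unfolding e'[symmetric] by (simp add: norm_Pair)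
  have "(norm w)\<^sup>2 = (norm y')\<^sup>2 + (norm z')\<^sup>2" using A unfolding B .
  then have "(norm z')\<^sup>2 \<le> (norm w)\<^sup>2" using zero_le_power2[of "norm y'"] by linarith
  then have nz': "norm z' \<le> norm w" by (rule power2_le_imp_le) auto
  have "norm (z + z') \<le> norm z + norm w" using norm_triangle_ineq[of z z'] nz' by simp
  also have "\<dots> \<le> norm z * (1 + norm w)"
  proof -
    have "1 * norm w \<le> norm z * norm w" using n1 by (intro mult_right_mono) auto
    then show ?thesis by (simp add: distrib_left)
  qed
  finally have "(norm (z + z'))\<^sup>2 \<le> (norm z * (1 + norm w))\<^sup>2"
    by (intro power_mono) auto
  moreover have "(z + z') \<bullet> (z + z') = (norm (z + z'))\<^sup>2" "z \<bullet> z = (norm z)\<^sup>2"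
    by (simp_all add: power2_norm_eq_inner)
  ultimately have "(z + z') \<bullet> (z + z') \<le> (1 + norm w)\<^sup>2 * (z \<bullet> z)"
    by (simp only: power_mult_distrib mult.commute)
  then have "((z + z') \<bullet> (z + z')) * Dm j (vecs Z) \<le> ((1 + norm w)\<^sup>2 * (z \<bullet> z)) * Dm j (vecs Z)"
    by (rule mult_right_mono) (rule D0)
  then show ?thesis unfolding g1 g0 by (simp add: mult.assoc)
qed

lemma F_nonneg: fixes Z :: "real^'n::finite^'n" shows "0 \<le> logdetF Z"
  using gram_ge1[of Z] by (simp add: logdetF_gram)

lemma F_col_lb: fixes Z :: "real^'n::finite^'n"
  shows "ln (1 + (norm (column j Z))\<^sup>2) \<le> logdetF Z"
  unfolding logdetF_gram by (rule ln_mono) (use gram_col_lb[of j Z] in \<open>auto intro: add_pos_nonneg\<close>)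

lemma F_col_lip: fixes Z :: "real^'n::finite^'n"
  shows "logdetF (Z + cm j w) \<le> logdetF Z + 2 * norm w"
proof -
  have g: "1 \<le> gram (vecs Z)" "1 \<le> gram (vecs (Z + cm j w))" by (rule gram_ge1)+
  have "logdetF (Z + cm j w) \<le> ln ((1 + norm w)\<^sup>2 * gram (vecs Z))"
    unfolding logdetF_gram by (rule ln_mono) (use g gram_col_lip[of Z j w] in auto)
  also have "\<dots> = 2 * ln (1 + norm w) + logdetF Z"
  proof -
    have pw: "0 < 1 + norm w" by (simp add: add_pos_nonneg)
    show ?thesis unfolding logdetF_gram using g pw
      by (subst ln_mult) (auto simp: ln_realpow)
  qed
  also have "ln (1 + norm w) \<le> norm w" by (rule ln_add_one_self_le_self) simp
  finally show ?thesis by simp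
qed

lemma F_lip_aux: fixes Z E :: "real^'n::finite^'n"
  shows "finite S \<Longrightarrow> logdetF (Z + zcol S E) \<le> logdetF Z + 2 * (\<Sum>c\<in>S. norm (column c E))"
proof (induction S rule: finite_induct)
  case empty then show ?case by (simp add: zcol_empty)
next
  case (insert x S)
  have e: "Z + zcol (insert x S) E = (Z + zcol S E) + cm x (column x E)"
    using insert(2) by (intro vec2_eqI) (auto simp: zcol_def cm_def column_def)
  show ?case unfolding e using F_col_lip[of "Z + zcol S E" x "column x E"] insert by simp
qed

lemma norm_column_le: "norm (column c (E::real^'n::finite^'m::finite)) \<le> norm E"
  by (rule norm_le_componentwise_cart) (simp add: column_def component_le_norm_cart)

lemma F_lip: fixes Z Z' :: "real^'n::finite^'n"
  shows "logdetF Z' \<le> logdetF Z + 2 * CARD('n) * norm (Z' - Z)"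
proof -
  have "logdetF Z' = logdetF (Z + zcol UNIV (Z' - Z))" by (simp add: zcol_UNIV)
  also have "\<dots> \<le> logdetF Z + 2 * (\<Sum>c\<in>UNIV. norm (column c (Z' - Z)))" by (rule F_lip_aux) simp
  also have "(\<Sum>c\<in>(UNIV::'n set). norm (column c (Z' - Z))) \<le> CARD('n) * norm (Z' - Z)"
    using sum_bounded_above[of UNIV "\<lambda>c. norm (column c (Z' - Z))" "norm (Z' - Z)", OF norm_column_le]
    by simp
  finally show ?thesis by simp
qed



lemma frob_eq_norm: "frob_norm (A::real^'c::finite^'r::finite) = norm A"
  unfolding frob_norm_def norm_vec_def L2_set_def
  by (simp add: sum_nonneg power2_abs)

lemma trace_inner: "trace (transpose (Y::real^'n::finite^'n) ** D) = Y \<bullet> D"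
  unfolding trace_def inner_vec_def matrix_matrix_mult_def transpose_def
  apply simp
  apply (rule sum.swap)
  done

lemma adjoint_inner:
  fixes A :: "real^'n::finite^'d::finite" and X :: "real^'n^'d" and D :: "real^'n^'n"
  shows "A \<bullet> (X ** D) = (transpose X ** A) \<bullet> D"
proof -
  define f where "f r c l = A$r$c * X$r$l * D$l$c" for r c l
  have e1: "A \<bullet> (X ** D) = (\<Sum>r\<in>UNIV. \<Sum>c\<in>UNIV. \<Sum>l\<in>UNIV. f r c l)"
    unfolding inner_vec_def matrix_matrix_mult_def f_def by (simp add: sum_distrib_left mult.assoc)
  have e2: "(transpose X ** A) \<bullet> D = (\<Sum>l\<in>UNIV. \<Sum>c\<in>UNIV. \<Sum>r\<in>UNIV. f r c l)"
    unfolding inner_vec_def matrix_matrix_mult_def transpose_def f_def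
    by (simp add: sum_distrib_right sum_distrib_left ac_simps)
  have "(\<Sum>r\<in>UNIV. \<Sum>c\<in>UNIV. \<Sum>l\<in>UNIV. f r c l) = (\<Sum>r\<in>UNIV. \<Sum>l\<in>UNIV. \<Sum>c\<in>UNIV. f r c l)"
    by (rule sum.cong[OF refl], rule sum.swap)
  also have "\<dots> = (\<Sum>l\<in>UNIV. \<Sum>r\<in>UNIV. \<Sum>c\<in>UNIV. f r c l)" by (rule sum.swap)
  also have "\<dots> = (\<Sum>l\<in>UNIV. \<Sum>c\<in>UNIV. \<Sum>r\<in>UNIV. f r c l)"
    by (rule sum.cong[OF refl], rule sum.swap)
  finally show ?thesis using e1 e2 by simp
qed

lemma augL_alt: "augL \<rho> X Z W Y \<beta> = logdetF Z + \<rho> * (norm (X - X ** W))\<^sup>2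
     + \<beta> / 2 * (norm (Z - W))\<^sup>2 + Y \<bullet> (Z - W)"
  unfolding augL_def frob_eq_norm trace_inner ..

lemma M_inv:
  fixes X :: "real^'n::finite^'d::finite"
  assumes b: "\<beta> > 0" and r: "\<rho> > 0"
  defines "M \<equiv> \<beta> *\<^sub>R mat 1 + (2 * \<rho>) *\<^sub>R (transpose X ** X)"
  shows "M ** matrix_inv M = mat 1"
proof -
  have ker: "\<forall>x. M *v x = 0 \<longrightarrow> x = 0"
  proof (intro allI impI)
    fix x :: "real^'n" assume h: "M *v x = 0"
    have "M *v x = \<beta> *\<^sub>R x + (2 * \<rho>) *\<^sub>R (transpose X *v (X *v x))"
      unfolding M_def by (simp add: matrix_vector_mult_add_rdistrib scaleR_matrix_vector_assoc[symmetric]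
          matrix_vector_mul_assoc[symmetric] del: transpose_matrix_vector)
    moreover have "x \<bullet> (transpose X *v (X *v x)) = (X *v x) \<bullet> (X *v x)"
      by (metis inner_commute dot_lmul_matrix transpose_matrix_vector)
    ultimately have "0 = \<beta> * (x \<bullet> x) + (2 * \<rho>) * ((X *v x) \<bullet> (X *v x))"
      using h by (metis inner_add_right inner_scaleR_right inner_zero_right)
    moreover have "0 \<le> (X *v x) \<bullet> (X *v x)" by simp
    moreover have "0 \<le> x \<bullet> x" by simp
    ultimately have "x \<bullet> x = 0" using b r
      by (smt (verit) mult_nonneg_nonneg mult_pos_pos)
    then show "x = 0" by simp
  qed
  then obtain B where "B ** M = mat 1" using matrix_left_invertible_ker by blast
  then have "M ** B = mat 1" using matrix_left_right_inverse by blast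
  with \<open>B ** M = mat 1\<close> have "\<exists>A'. M ** A' = mat 1 \<and> A' ** M = mat 1" by blast
  then show ?thesis unfolding matrix_inv_def by (rule someI2_ex) blast
qed

lemma mm_diff_l: "(A::real^'m::finite^'n::finite) ** (B - C) = A ** B - A ** (C::real^'k::finite^'m)"
  by (rule vec2_eqI) (simp add: matrix_matrix_mult_def sum_subtractf right_diff_distrib)

lemma mm_add_r: "((A::real^'m::finite^'n::finite) + B) ** (C::real^'k::finite^'m) = A ** C + B ** C"
  by (rule vec2_eqI) (simp add: matrix_matrix_mult_def sum.distrib distrib_right)

lemma mm_scale_l: "((c::real) *\<^sub>R (A::real^'m::finite^'n::finite)) ** (B::real^'k::finite^'m) = c *\<^sub>R (A ** B)"
  by (rule vec2_eqI) (simp add: matrix_matrix_mult_def sum_distrib_left mult.assoc)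

lemma mm_M: "((b::real) *\<^sub>R mat 1 + c *\<^sub>R (T::real^'n::finite^'n)) ** (W::real^'k::finite^'n)
    = b *\<^sub>R W + c *\<^sub>R (T ** W)"
  by (simp add: mm_add_r mm_scale_l)

lemma W_min:
  fixes X :: "real^'n::finite^'d::finite" and Z W Y :: "real^'n^'n"
  assumes b: "\<beta> > 0" and r: "\<rho> > 0"
  and W': "W' = matrix_inv (\<beta> *\<^sub>R mat 1 + (2 * \<rho>) *\<^sub>R (transpose X ** X))
        ** ((2 * \<rho>) *\<^sub>R (transpose X ** X) + Y + \<beta> *\<^sub>R Z)"
  shows "augL \<rho> X Z W' Y \<beta> \<le> augL \<rho> X Z W Y \<beta>"
proof -
  define M where "M = \<beta> *\<^sub>R mat 1 + (2 * \<rho>) *\<^sub>R (transpose X ** X)"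
  define R where "R = (2 * \<rho>) *\<^sub>R (transpose X ** X) + Y + \<beta> *\<^sub>R Z"
  have "M ** W' = R"
    unfolding W' M_def[symmetric] R_def[symmetric] matrix_mul_assoc
    using M_inv[OF b r, of X] unfolding M_def by simp
  then have MW: "\<beta> *\<^sub>R W' + (2 * \<rho>) *\<^sub>R (transpose X ** X ** W') = R"
    unfolding M_def mm_M .
  define D where "D = W - W'"
  define E where "E = X - X ** W'"
  have WD: "W = W' + D" unfolding D_def by simp
  have e1: "X - X ** W = E - X ** D" unfolding E_def D_def mm_diff_l by simp
  have e2: "Z - W = (Z - W') - D" unfolding D_def by simp
  have G: "(2 * \<rho>) *\<^sub>R (transpose X ** E) + \<beta> *\<^sub>R (Z - W') + Y = 0"
  proof -
    have TE: "transpose X ** E = transpose X ** X - transpose X ** X ** W'"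
      unfolding E_def mm_diff_l matrix_mul_assoc ..
    have "(2 * \<rho>) *\<^sub>R (transpose X ** X - transpose X ** X ** W') + \<beta> *\<^sub>R (Z - W') + Y
       = R - (\<beta> *\<^sub>R W' + (2 * \<rho>) *\<^sub>R (transpose X ** X ** W'))"
      unfolding R_def by (simp add: algebra_simps)
    then show ?thesis unfolding TE MW by simp
  qed
  have A5: "2 * \<rho> * (E \<bullet> (X ** D)) + \<beta> * ((Z - W') \<bullet> D) + Y \<bullet> D = 0"
  proof -
    have "((2 * \<rho>) *\<^sub>R (transpose X ** E) + \<beta> *\<^sub>R (Z - W') + Y) \<bullet> D = 0" using G by simp
    then show ?thesis unfolding adjoint_inner by (simp add: inner_add_left)
  qed
  have A1: "(norm (E - X ** D))\<^sup>2 = (norm E)\<^sup>2 - 2 * (E \<bullet> (X ** D)) + (norm (X ** D))\<^sup>2"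
    by (simp add: power2_norm_eq_inner inner_diff_left inner_diff_right inner_commute)
  have A2: "(norm ((Z - W') - D))\<^sup>2 = (norm (Z - W'))\<^sup>2 - 2 * ((Z - W') \<bullet> D) + (norm D)\<^sup>2"
    by (simp add: power2_norm_eq_inner inner_diff_left inner_diff_right inner_commute)
  have A3: "Y \<bullet> ((Z - W') - D) = Y \<bullet> (Z - W') - Y \<bullet> D" by (simp add: inner_diff_right)
  have B1: "\<rho> * (norm (E - X ** D))\<^sup>2 = \<rho> * (norm E)\<^sup>2 - 2 * \<rho> * (E \<bullet> (X ** D)) + \<rho> * (norm (X ** D))\<^sup>2"
    unfolding A1 by (simp add: algebra_simps)
  have B2: "\<beta> / 2 * (norm ((Z - W') - D))\<^sup>2 = \<beta> / 2 * (norm (Z - W'))\<^sup>2 - \<beta> * ((Z - W') \<bullet> D) + \<beta> / 2 * (norm D)\<^sup>2"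
    unfolding A2 by (simp add: algebra_simps)
  have P1: "0 \<le> \<rho> * (norm (X ** D))\<^sup>2" using r by simp
  have P2: "0 \<le> \<beta> / 2 * (norm D)\<^sup>2" using b by simp
  show ?thesis unfolding augL_alt e1 e2 B1 B2 A3 E_def[symmetric]
    using A5 P1 P2 by linarith
qed

lemma complete_sq:
  fixes a Y :: "'a::real_inner"
  assumes b: "b > 0"
  shows "b / 2 * (norm a)\<^sup>2 + Y \<bullet> a = b / 2 * (norm (a + (1/b) *\<^sub>R Y))\<^sup>2 - (norm Y)\<^sup>2 / (2 * b)"
proof -
  have e: "(norm (a + (1/b) *\<^sub>R Y))\<^sup>2 = (norm a)\<^sup>2 + 2 * (1/b) * (Y \<bullet> a) + (1/b)\<^sup>2 * (norm Y)\<^sup>2"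
    unfolding power2_norm_eq_inner
    by (simp add: inner_add_left inner_add_right inner_commute power2_eq_square algebra_simps)
  show ?thesis unfolding e using b by (simp add: field_simps power2_eq_square)
qed

lemma norm_mat_le:
  fixes A :: "real^'c::finite^'r::finite"
  assumes "\<And>i j. \<bar>A$i$j\<bar> \<le> c"
  shows "norm A \<le> real CARD('r) * (real CARD('c) * c)"
proof -
  have "norm A \<le> (\<Sum>i\<in>UNIV. norm (A$i))" unfolding norm_vec_def by (rule L2_set_le_sum) simp
  also have "\<dots> \<le> (\<Sum>i\<in>(UNIV::'r set). real CARD('c) * c)"
  proof (rule sum_mono)
    fix i
    have "norm (A$i) \<le> (\<Sum>j\<in>UNIV. \<bar>A$i$j\<bar>)" by (rule norm_le_l1_cart)
    also have "\<dots> \<le> real CARD('c) * c" using sum_bounded_above[of UNIV "\<lambda>j. \<bar>A$i$j\<bar>" c] assms by simp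
    finally show "norm (A$i) \<le> real CARD('c) * c" .
  qed
  finally show ?thesis by simp
qed

lemma le_1_sq: "0 \<le> (x::real) \<Longrightarrow> x \<le> 1 + x\<^sup>2"
proof (cases "x \<le> 1")
  case True then show ?thesis using zero_le_power2[of x] by linarith
next
  case False then have "x * 1 \<le> x * x" by (intro mult_left_mono) auto
  then show ?thesis by (simp add: power2_eq_square)
qed

theorem lemma2:
  fixes X :: "real^'n^'d"
    and \<rho> :: real
    and \<beta> :: "nat \<Rightarrow> real"
    and Z W Y :: "nat \<Rightarrow> real^'n^'n"
  assumes rho_pos: "\<rho> > 0"
    and beta_pos: "\<And>k. \<beta> k > 0"
    and sum1: "summable (\<lambda>k. \<beta> (Suc k) / (\<beta> k)^2)"
    and sum2: "summable (\<lambda>k. 1 / \<beta> k)"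
    and Y0: "Y 0 = 0"
    and W_step: "\<And>k. W (Suc k) =
        matrix_inv (\<beta> k *\<^sub>R mat 1 + (2 * \<rho>) *\<^sub>R (transpose X ** X))
        ** ((2 * \<rho>) *\<^sub>R (transpose X ** X) + Y k + \<beta> k *\<^sub>R Z k)"
    and Z_step: "\<And>k Z'. augL \<rho> X (Z (Suc k)) (W (Suc k)) (Y k) (\<beta> k)
                       \<le> augL \<rho> X Z' (W (Suc k)) (Y k) (\<beta> k)"
    and Y_step: "\<And>k. Y (Suc k) = Y k + \<beta> k *\<^sub>R (Z (Suc k) - W (Suc k))"
  shows "bounded (range W) \<and> bounded (range Z)"
proof -
  define K where "K = 2 * real CARD('n)"
  have K0: "0 \<le> K" unfolding K_def by simp
  have Flip: "logdetF A \<le> logdetF B + K * norm (A - B)" for A B :: "real^'n^'n"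
    using F_lip[of A B] unfolding K_def by simp
  have Yb: "norm (Y (Suc k)) \<le> 2 * K" for k
  proof -
    define b where "b = \<beta> k"
    have bp: "b > 0" unfolding b_def by (rule beta_pos)
    define Z1 where "Z1 = Z (Suc k)"
    define W1 where "W1 = W (Suc k)"
    define C where "C = W1 - (1/b) *\<^sub>R Y k"
    have "augL \<rho> X Z1 W1 (Y k) b \<le> augL \<rho> X C W1 (Y k) b"
      unfolding Z1_def W1_def b_def by (rule Z_step)
    then have i0: "logdetF Z1 + (b / 2 * (norm (Z1 - W1))\<^sup>2 + Y k \<bullet> (Z1 - W1))
        \<le> logdetF C + (b / 2 * (norm (C - W1))\<^sup>2 + Y k \<bullet> (C - W1))"
      unfolding augL_alt by simp
    have s1: "b / 2 * (norm (Z1 - W1))\<^sup>2 + Y k \<bullet> (Z1 - W1) = b / 2 * (norm (Z1 - C))\<^sup>2 - (norm (Y k))\<^sup>2 / (2 * b)"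
      using complete_sq[OF bp, of "Z1 - W1" "Y k"] unfolding C_def by (simp add: algebra_simps)
    have s2: "b / 2 * (norm (C - W1))\<^sup>2 + Y k \<bullet> (C - W1) = - (norm (Y k))\<^sup>2 / (2 * b)"
      using complete_sq[OF bp, of "C - W1" "Y k"] unfolding C_def by (simp add: algebra_simps)
    define r where "r = norm (Z1 - C)"
    have i1: "logdetF Z1 + b / 2 * r\<^sup>2 \<le> logdetF C" using i0 unfolding s1 s2 r_def by simp
    have i2: "logdetF C \<le> logdetF Z1 + K * r" using Flip[of C Z1] unfolding r_def by (simp add: norm_minus_commute)
    have i3: "b / 2 * r\<^sup>2 \<le> K * r" using i1 i2 by linarith
    have Yeq: "Y (Suc k) = b *\<^sub>R (Z1 - C)"
      unfolding Y_step Z1_def[symmetric] W1_def[symmetric] b_def[symmetric] C_def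
      using bp by (simp add: algebra_simps)
    have nY: "norm (Y (Suc k)) = b * r" unfolding Yeq r_def using bp by simp
    show ?thesis
    proof (cases "r = 0")
      case True then show ?thesis using nY K0 by simp
    next
      case False
      then have rp: "r > 0" unfolding r_def by simp
      have "(b * r) * r \<le> (2 * K) * r" using i3 by (simp add: power2_eq_square algebra_simps)
      then have "b * r \<le> 2 * K" using rp by (rule mult_right_le_imp_le)
      then show ?thesis using nY by simp
    qed
  qed
  have Yb': "norm (Y k) \<le> 2 * K" for k
    using Yb[of "k - 1"] Y0 K0 by (cases k) auto
  define S2 where "S2 = suminf (\<lambda>k. 1 / \<beta> k)"
  have ib: "1 / \<beta> k \<le> S2" for k
    using sum_le_suminf[OF sum2, of "{k}"] beta_pos unfolding S2_def
    by (simp add: less_imp_le)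
  define a where "a k = 16 * K\<^sup>2 * (\<beta> (Suc k) / (\<beta> k)\<^sup>2 + 1 / \<beta> k)" for k
  have a_sum: "summable a"
    unfolding a_def by (rule summable_mult[OF summable_add[OF sum1 sum2]])
  have a_nn: "0 \<le> a k" for k
    unfolding a_def using beta_pos[of k] beta_pos[of "Suc k"] by (simp add: less_imp_le)
  define \<Phi> where "\<Phi> k = augL \<rho> X (Z k) (W k) (Y k) (\<beta> k)" for k
  have step: "\<Phi> (Suc k) \<le> \<Phi> k + a k" for k
  proof -
    define b where "b = \<beta> k"
    define b1 where "b1 = \<beta> (Suc k)"
    have bp: "b > 0" "b1 > 0" unfolding b_def b1_def by (rule beta_pos)+
    define Z1 where "Z1 = Z (Suc k)"
    define W1 where "W1 = W (Suc k)"
    define \<Delta> where "\<Delta> = Y (Suc k) - Y k"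
    have h1: "augL \<rho> X Z1 W1 (Y k) b \<le> augL \<rho> X (Z k) W1 (Y k) b"
      unfolding Z1_def W1_def b_def by (rule Z_step)
    have h2: "augL \<rho> X (Z k) W1 (Y k) b \<le> augL \<rho> X (Z k) (W k) (Y k) b"
      unfolding W1_def b_def by (rule W_min[OF beta_pos rho_pos W_step])
    have d: "Z1 - W1 = (1/b) *\<^sub>R \<Delta>"
      unfolding \<Delta>_def Y_step Z1_def W1_def b_def using beta_pos[of k] by simp
    have h3: "augL \<rho> X Z1 W1 (Y (Suc k)) b1 = augL \<rho> X Z1 W1 (Y k) b
        + ((b1 - b) / 2 * (norm (Z1 - W1))\<^sup>2 + \<Delta> \<bullet> (Z1 - W1))"
      unfolding augL_alt \<Delta>_def
      apply (simp add: inner_diff_left algebra_simps)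
      apply (simp add: field_simps)
      done
    have n1: "(norm (Z1 - W1))\<^sup>2 = (1/b)\<^sup>2 * (norm \<Delta>)\<^sup>2" unfolding d using bp
      by (simp add: power_divide power_one_over)
    have n2: "\<Delta> \<bullet> (Z1 - W1) = (1/b) * (norm \<Delta>)\<^sup>2" unfolding d
      by (simp add: power2_norm_eq_inner)
    have h4: "(b1 - b) / 2 * (norm (Z1 - W1))\<^sup>2 + \<Delta> \<bullet> (Z1 - W1)
        = (norm \<Delta>)\<^sup>2 * (b1 / (2 * b\<^sup>2) + 1 / (2 * b))"
      unfolding n1 n2 using bp by (simp add: field_simps power2_eq_square)
    have "norm \<Delta> \<le> norm (Y (Suc k)) + norm (Y k)" unfolding \<Delta>_def by (rule norm_triangle_ineq4)
    also have "\<dots> \<le> 4 * K" using Yb'[of "Suc k"] Yb'[of k] by simp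
    finally have "(norm \<Delta>)\<^sup>2 \<le> (4 * K)\<^sup>2" by (intro power_mono) auto
    then have nD: "(norm \<Delta>)\<^sup>2 \<le> 16 * K\<^sup>2" by (simp add: power_mult_distrib)
    have fr: "b1 / (2 * b\<^sup>2) + 1 / (2 * b) \<le> b1 / b\<^sup>2 + 1 / b"
      using bp by (simp add: field_simps)
    have fr0: "0 \<le> b1 / (2 * b\<^sup>2) + 1 / (2 * b)" using bp by simp
    have "(norm \<Delta>)\<^sup>2 * (b1 / (2 * b\<^sup>2) + 1 / (2 * b)) \<le> (16 * K\<^sup>2) * (b1 / b\<^sup>2 + 1 / b)"
      by (rule mult_mono[OF nD fr]) (use fr0 in auto)
    then have "(norm \<Delta>)\<^sup>2 * (b1 / (2 * b\<^sup>2) + 1 / (2 * b)) \<le> a k"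
      unfolding a_def b_def b1_def .
    then show ?thesis unfolding \<Phi>_def
      using h1 h2 h3 h4 unfolding Z1_def W1_def b_def b1_def by linarith
  qed
  have Phib0: "\<Phi> k \<le> \<Phi> 0 + sum a {..<k}" for k
  proof (induction k)
    case 0 then show ?case by simp
  next
    case (Suc k) then show ?case using step[of k] by simp
  qed
  have Phib: "\<Phi> k \<le> \<Phi> 0 + suminf a" for k
    using Phib0[of k] sum_le_suminf[OF a_sum, of "{..<k}"] a_nn by fastforce
  define B where "B = \<Phi> 0 + suminf a + 2 * K\<^sup>2 * S2"
  have Fb: "logdetF (Z k) \<le> B" for k
  proof -
    have bp: "\<beta> k > 0" by (rule beta_pos)
    have "\<Phi> k = logdetF (Z k) + \<rho> * (norm (X - X ** W k))\<^sup>2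
        + (\<beta> k / 2 * (norm (Z k - W k))\<^sup>2 + Y k \<bullet> (Z k - W k))"
      unfolding \<Phi>_def augL_alt by simp
    also have "\<beta> k / 2 * (norm (Z k - W k))\<^sup>2 + Y k \<bullet> (Z k - W k)
        = \<beta> k / 2 * (norm (Z k - W k + (1 / \<beta> k) *\<^sub>R Y k))\<^sup>2 - (norm (Y k))\<^sup>2 / (2 * \<beta> k)"
      by (rule complete_sq[OF bp])
    finally have "logdetF (Z k) \<le> \<Phi> k + (norm (Y k))\<^sup>2 / (2 * \<beta> k)"
      using rho_pos bp by (smt (verit) mult_nonneg_nonneg zero_le_power2 divide_nonneg_nonneg)
    moreover have "(norm (Y k))\<^sup>2 / (2 * \<beta> k) \<le> 2 * K\<^sup>2 * S2"
    proof -
      have "(norm (Y k))\<^sup>2 \<le> (2 * K)\<^sup>2" using Yb'[of k] by (intro power_mono) auto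
      then have "(norm (Y k))\<^sup>2 / (2 * \<beta> k) \<le> (2 * K)\<^sup>2 / (2 * \<beta> k)"
        by (rule divide_right_mono) (use bp in auto)
      also have "\<dots> = 2 * K\<^sup>2 * (1 / \<beta> k)" using bp by (simp add: field_simps power2_eq_square)
      also have "\<dots> \<le> 2 * K\<^sup>2 * S2" using ib[of k] by (intro mult_left_mono) auto
      finally show ?thesis .
    qed
    ultimately show ?thesis using Phib[of k] unfolding B_def by linarith
  qed
  define ZB where "ZB = real CARD('n) * (real CARD('n) * exp B)"
  have Zb: "norm (Z k) \<le> ZB" for k
    unfolding ZB_def
  proof (rule norm_mat_le)
    fix i j
    have "\<bar>Z k $ i $ j\<bar> \<le> norm (column j (Z k))"
      using component_le_norm_cart[of "column j (Z k)" i] by (simp add: column_def)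
    also have "\<dots> \<le> 1 + (norm (column j (Z k)))\<^sup>2" by (rule le_1_sq) simp
    also have "\<dots> = exp (ln (1 + (norm (column j (Z k)))\<^sup>2))"
      by (simp add: add_pos_nonneg)
    also have "\<dots> \<le> exp B" using F_col_lb[of j "Z k"] Fb[of k] by simp
    finally show "\<bar>Z k $ i $ j\<bar> \<le> exp B" .
  qed
  have Wb: "norm (W (Suc k)) \<le> ZB + S2 * (4 * K)" for k
  proof -
    have bp: "\<beta> k > 0" by (rule beta_pos)
    have "W (Suc k) = Z (Suc k) - (1 / \<beta> k) *\<^sub>R (Y (Suc k) - Y k)"
      unfolding Y_step using bp by simp
    then have "norm (W (Suc k)) \<le> norm (Z (Suc k)) + (1 / \<beta> k) * norm (Y (Suc k) - Y k)"
      using norm_triangle_ineq4[of "Z (Suc k)" "(1 / \<beta> k) *\<^sub>R (Y (Suc k) - Y k)"] bp by simp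
    also have "(1 / \<beta> k) * norm (Y (Suc k) - Y k) \<le> S2 * (4 * K)"
    proof (rule mult_mono)
      show "1 / \<beta> k \<le> S2" by (rule ib)
      show "norm (Y (Suc k) - Y k) \<le> 4 * K"
        using norm_triangle_ineq4[of "Y (Suc k)" "Y k"] Yb'[of "Suc k"] Yb'[of k] by simp
      show "0 \<le> S2" using ib[of 0] beta_pos[of 0] by (smt (verit) divide_pos_pos)
    qed simp
    finally show ?thesis using Zb[of "Suc k"] by simp
  qed
  have "bounded (range W)"
    unfolding bounded_iff
  proof (intro exI ballI)
    fix x assume "x \<in> range W"
    then obtain k where "x = W k" by auto
    then show "norm x \<le> max (norm (W 0)) (ZB + S2 * (4 * K))"
      using Wb[of "k - 1"] by (cases k) auto
  qed
  moreover have "bounded (range Z)"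
    unfolding bounded_iff using Zb by blast
  ultimately show ?thesis ..
qed


end
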